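(* Let $A\in\mathbb C^{n\times n}$, $b\in\mathbb C^n$, and let $M, F\in\mathbb C^{n\times n}$ be nonsingular. Partition the index set $\{1,\dots,n\}$ into $m$ consecutive blocks, and write accordingly $x = (x^{(1)},\dots,x^{(m)})$, $b=(b^{(1)},\dots,b^{(m)})$, and $A = (A^{(s,q)})_{s,q=1}^m$ in block form; assume $M$ and $F$ are block diagonal with respect to this partition, with nonsingular diagonal blocks $M^{(1)},\dots,M^{(m)}$ and $F^{(1)},\dots,F^{(m)}$. Consider any sequence of subsets $\Omega_k\subseteq\{1,\dots,m\}$, $k\in\mathbb N$, such that each $s\in\{1,\dots,m\}$ belongs to $\Omega_k$ for infinitely many $k$, and any functions $\delta_s(q,k)\in\mathbb N$ ($s,q\in\{1,\dots,m\}$, $k\in\mathbb N$) with $\delta_s(q,k)\le k$ and $\lim_{k\to\infty}\delta_s(q,k)=\infty$ for all $s,q$. Given an arbitrary initial vector $x^0$, define the asynchronous alternating iteration: for each $k\in\mathbb N$ and all $s\in\{1,\dots,m\}$, \[ y^{(s),k} := x^{(s),\delta_s(s,k)} + {M^{(s)}}^{-1}\Big(b^{(s)} - \sum_{q=1}^m A^{(s,q)} x^{(q),\delta_s(q,k)}\Big), \] \[ x^{(s),k+1} := \begin{cases} y^{(s),\delta_s(s,k)} + {F^{(s)}}^{-1}\Big(b^{(s)} - \displaystyle\sum_{q=1}^m A^{(s,q)} y^{(q),\delta_s(q,k)}\Big) & \text{if } s\in\Omega_k,\\[1ex] x^{(s),k} & \text{if } s\notin\Omega_k.\end{cases} \]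 If $A$ is an $\mathsf H$-matrix and \[ \langle M\rangle - |M - A| = \langle A\rangle, \qquad \langle F\rangle - |F - A| = \langle A\rangle, \] then for every initial guess $x^0$, every such sequence $\{\Omega_k\}$ and every such delay functions $\delta_1,\dots,\delta_m$, the sequence $x^k$ converges to the solution of $Ax=b$.
   Context: For a matrix $\mathcal A$, $|\mathcal A|$ denotes the entrywise absolute value (modulus) and $\rho(\mathcal A)$ its spectral radius. Comparisons between matrices are entrywise. A square real matrix $\mathcal A$ is an $\mathsf M$-matrix if there exists $\alpha\in\mathbb R$ with $\alpha I - \mathcal A \ge 0$ (entrywise) and $\alpha > \rho(\alpha I - \mathcal A)$. The comparison matrix $\langle \mathcal A\rangle$ of a square matrix $\mathcal A$ is defined by $\langle \mathcal A\rangle_{i,i} := |\mathcal A_{i,i}|$ and $\langle \mathcal A\rangle_{i,j} := -|\mathcal A_{i,j}|$ for $i\ne j$. A square matrix $\mathcal A$ is an $\mathsf H$-matrix if its comparison matrix $\langle\mathcal A\rangle$ is an $\mathsf M$-matrix. *)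

theory Defs
  imports Jordan_Normal_Form.Spectral_Radius
begin

definition abs_mat :: "complex mat \<Rightarrow> real mat" where
  "abs_mat A = map_mat cmod A"

definition comparison_mat :: "complex mat \<Rightarrow> real mat" where
  "comparison_mat A = mat (dim_row A) (dim_col A)
     (\<lambda>(i,j). if i = j then cmod (A $$ (i,j)) else - cmod (A $$ (i,j)))"

definition M_matrix :: "real mat \<Rightarrow> bool" where
  "M_matrix B \<longleftrightarrow> square_mat B \<and>
     (\<exists>\<alpha>::real.
        (\<forall>i < dim_row B. \<forall>j < dim_col B. (\<alpha> \<cdot>\<^sub>m 1\<^sub>m (dim_row B) - B) $$ (i,j) \<ge> 0) \<and>
        \<alpha> > spectral_radius (map_mat complex_of_real (\<alpha> \<cdot>\<^sub>m 1\<^sub>m (dim_row B) - B)))"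

definition H_matrix :: "complex mat \<Rightarrow> bool" where
  "H_matrix A \<longleftrightarrow> M_matrix (comparison_mat A)"

definition inv_mat :: "complex mat \<Rightarrow> complex mat" where
  "inv_mat B = (SOME C. inverts_mat B C \<and> inverts_mat C B)"

text \<open>Consecutive block partition given by boundaries p 0 = 0 < p 1 < ... < p m = n;
  block s (for s < m) is the index range {p s ..< p (Suc s)}.\<close>
definition block_partition :: "nat \<Rightarrow> nat \<Rightarrow> (nat \<Rightarrow> nat) \<Rightarrow> bool" where
  "block_partition n m p \<longleftrightarrow> p 0 = 0 \<and> p m = n \<and> (\<forall>s < m. p s < p (Suc s))"

definition blk_size :: "(nat \<Rightarrow> nat) \<Rightarrow> nat \<Rightarrow> nat" where
  "blk_size p s = p (Suc s) - p s"

definition blk_mat :: "(nat \<Rightarrow> nat) \<Rightarrow> 'a mat \<Rightarrow> nat \<Rightarrow> nat \<Rightarrow> 'a mat" where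
  "blk_mat p A s q = mat (blk_size p s) (blk_size p q) (\<lambda>(i,j). A $$ (p s + i, p q + j))"

definition blk_vec :: "(nat \<Rightarrow> nat) \<Rightarrow> 'a vec \<Rightarrow> nat \<Rightarrow> 'a vec" where
  "blk_vec p x s = vec (blk_size p s) (\<lambda>i. x $ (p s + i))"

definition blk_row_sum :: "(nat \<Rightarrow> nat) \<Rightarrow> nat \<Rightarrow> complex mat \<Rightarrow> nat \<Rightarrow> (nat \<Rightarrow> complex vec) \<Rightarrow> complex vec" where
  "blk_row_sum p m A s z = vec (blk_size p s) (\<lambda>i. \<Sum>q<m. (blk_mat p A s q *\<^sub>v z q) $ i)"

definition block_diagonal :: "(nat \<Rightarrow> nat) \<Rightarrow> nat \<Rightarrow> complex mat \<Rightarrow> bool" where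
  "block_diagonal p m M \<longleftrightarrow> (\<forall>s<m. \<forall>q<m. s \<noteq> q \<longrightarrow> blk_mat p M s q = 0\<^sub>m (blk_size p s) (blk_size p q))"

end

theory Submission
  imports Defs
begin

lemma bp_mono_aux: "block_partition n m p \<Longrightarrow> t \<le> m \<longrightarrow> s \<le> t \<longrightarrow> p s \<le> p t"
proof (induction t)
  case (Suc t)
  then show ?case unfolding block_partition_def
    by (metis Suc_le_lessD le_Suc_eq le_trans less_imp_le_nat)
qed simp

lemma bp_mono: "block_partition n m p \<Longrightarrow> s \<le> t \<Longrightarrow> t \<le> m \<Longrightarrow> p s \<le> p t"
  using bp_mono_aux by blast

lemma bp_strict: "block_partition n m p \<Longrightarrow> s < t \<Longrightarrow> t \<le> m \<Longrightarrow> p s < p t"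
  using bp_mono[of n m p "Suc s" t] unfolding block_partition_def
  by (metis Suc_leI le_trans less_le_trans not_le order_less_imp_le)

lemma bp_le_n: "block_partition n m p \<Longrightarrow> s \<le> m \<Longrightarrow> p s \<le> n"
  using bp_mono[of n m p s m] unfolding block_partition_def by auto

lemma bp_disj: "block_partition n m p \<Longrightarrow> s < m \<Longrightarrow> q < m \<Longrightarrow> p s \<le> l \<Longrightarrow> l < p (Suc s)
  \<Longrightarrow> p q \<le> l \<Longrightarrow> l < p (Suc q) \<Longrightarrow> s = q"
proof (rule ccontr)
  assume bp: "block_partition n m p" and *: "s < m" "q < m" "p s \<le> l" "l < p (Suc s)"
    "p q \<le> l" "l < p (Suc q)" and ne: "s \<noteq> q"
  show False
  proof (cases "s < q")
    case True
    then have "p (Suc s) \<le> p q" using bp_mono[OF bp, of "Suc s" q] * by auto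
    then show False using * by auto
  next
    case False
    then have "q < s" using ne by auto
    then have "p (Suc q) \<le> p s" using bp_mono[OF bp, of "Suc q" s] * by auto
    then show False using * by auto
  qed
qed

lemma bp_cover: assumes bp: "block_partition n m p" and l: "l < n"
  shows "\<exists>s<m. p s \<le> l \<and> l < p (Suc s)"
proof -
  define S where "S = {s. s \<le> m \<and> p s \<le> l}"
  have fin: "finite S" unfolding S_def by auto
  have "0 \<in> S" using bp unfolding S_def block_partition_def by auto
  define s where "s = Max S"
  have sS: "s \<in> S" using fin \<open>0 \<in> S\<close> unfolding s_def by (intro Max_in) auto
  have "s \<noteq> m" using sS bp l unfolding S_def block_partition_def by auto
  hence sm: "s < m" using sS unfolding S_def by auto
  have "Suc s \<notin> S" using Max_ge[OF fin] unfolding s_def[symmetric] by fastforce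
  hence "l < p (Suc s)" using sm unfolding S_def by auto
  thus ?thesis using sm sS unfolding S_def by auto
qed

lemma bp_sum: assumes bp: "block_partition n m p"
  shows "(\<Sum>q<m. \<Sum>l\<in>{p q..<p (Suc q)}. f l) = (\<Sum>l<n. f l)"
proof -
  have "k \<le> m \<Longrightarrow> (\<Sum>q<k. \<Sum>l\<in>{p q..<p (Suc q)}. f l) = (\<Sum>l\<in>{p 0..<p k}. f l)" for k
  proof (induction k)
    case 0 then show ?case by simp
  next
    case (Suc k)
    have "p 0 \<le> p k" "p k \<le> p (Suc k)" using bp_mono[OF bp] Suc.prems by auto
    then show ?case using Suc by (simp add: sum.atLeastLessThan_concat)
  qed
  from this[of m] bp show ?thesis unfolding block_partition_def by (simp add: atLeast0LessThan)
qed

lemma sum_shift_ivl: "(\<Sum>l<(b::nat). f (a + l)) = (\<Sum>l\<in>{a..<a+b}. f l)"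
proof (induction b)
  case (Suc b)
  then show ?case by (simp add: add.commute)
qed simp

lemma blk_vec_index[simp]: "i < blk_size p s \<Longrightarrow> blk_vec p v s $ i = v $ (p s + i)"
  unfolding blk_vec_def by simp

lemma blk_vec_dim[simp]: "dim_vec (blk_vec p v s) = blk_size p s"
  unfolding blk_vec_def by simp

lemma blk_vec_carrier[simp]: "blk_vec p v s \<in> carrier_vec (blk_size p s)"
  unfolding blk_vec_def by simp

lemma blk_mat_index[simp]: "i < blk_size p s \<Longrightarrow> j < blk_size p q \<Longrightarrow>
   blk_mat p A s q $$ (i,j) = A $$ (p s + i, p q + j)"
  unfolding blk_mat_def by simp

lemma blk_mat_carrier[simp]: "blk_mat p A s q \<in> carrier_mat (blk_size p s) (blk_size p q)"
  unfolding blk_mat_def by simp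

lemma blk_mat_dim[simp]: "dim_row (blk_mat p A s q) = blk_size p s" "dim_col (blk_mat p A s q) = blk_size p q"
  unfolding blk_mat_def by simp_all

lemma blk_row_sum_index:
  assumes i: "i < blk_size p s"
  shows "blk_row_sum p m A s (\<lambda>q. blk_vec p (z q) q) $ i =
    (\<Sum>q<m. \<Sum>l\<in>{p q..<p (Suc q)}. A $$ (p s + i, l) * z q $ l)"
proof -
  have "blk_row_sum p m A s (\<lambda>q. blk_vec p (z q) q) $ i =
    (\<Sum>q<m. (blk_mat p A s q *\<^sub>v blk_vec p (z q) q) $ i)"
    using i unfolding blk_row_sum_def by simp
  also have "\<dots> = (\<Sum>q<m. \<Sum>l<blk_size p q. A $$ (p s + i, p q + l) * z q $ (p q + l))"
    using i by (intro sum.cong refl) (simp add: scalar_prod_def atLeast0LessThan)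
  also have "\<dots> = (\<Sum>q<m. \<Sum>l\<in>{p q..<p (Suc q)}. A $$ (p s + i, l) * z q $ l)"
  proof (rule sum.cong[OF refl])
    fix q assume "q \<in> {..<m}"
    show "(\<Sum>l<blk_size p q. A $$ (p s + i, p q + l) * z q $ (p q + l)) =
       (\<Sum>l\<in>{p q..<p (Suc q)}. A $$ (p s + i, l) * z q $ l)"
      unfolding sum_shift_ivl[of "\<lambda>l. A $$ (p s + i, l) * z q $ l"] blk_size_def
      by (cases "p q \<le> p (Suc q)") auto
  qed
  finally show ?thesis .
qed

lemma bd_zero: assumes bp: "block_partition n m p" and G: "G \<in> carrier_mat n n"
  and bd: "block_diagonal p m G" and s: "s < m" and q: "q < m" and sq: "s \<noteq> q"
  and j: "p s \<le> j" "j < p (Suc s)" and l: "p q \<le> l" "l < p (Suc q)"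
  shows "G $$ (j,l) = 0"
proof -
  have ij: "j - p s < blk_size p s" "l - p q < blk_size p q" unfolding blk_size_def using j l by auto
  have "blk_mat p G s q $$ (j - p s, l - p q) = 0"
    using bd s q sq ij unfolding block_diagonal_def by auto
  thus ?thesis using j l blk_mat_index[OF ij, of G] by simp
qed

lemma bd_row_sum: assumes bp: "block_partition n m p" and G: "G \<in> carrier_mat n n"
  and bd: "block_diagonal p m G" and s: "s < m"
  and j: "p s \<le> j" "j < p (Suc s)"
  shows "(\<Sum>q<m. \<Sum>l\<in>{p q..<p (Suc q)}. G $$ (j,l) * f q l) = (\<Sum>l\<in>{p s..<p (Suc s)}. G $$ (j,l) * f s l)"
proof -
  have "(\<Sum>q<m. \<Sum>l\<in>{p q..<p (Suc q)}. G $$ (j,l) * f q l) =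
     (\<Sum>q\<in>{s}. \<Sum>l\<in>{p q..<p (Suc q)}. G $$ (j,l) * f q l)"
  proof (intro sum.mono_neutral_right)
    show "\<forall>q\<in>{..<m} - {s}. (\<Sum>l\<in>{p q..<p (Suc q)}. G $$ (j,l) * f q l) = 0"
    proof
      fix q assume q: "q \<in> {..<m} - {s}"
      show "(\<Sum>l\<in>{p q..<p (Suc q)}. G $$ (j,l) * f q l) = 0"
        using bd_zero[OF bp G bd s _ _ j, of q] q by (intro sum.neutral) auto
    qed
  qed (use s in auto)
  thus ?thesis by simp
qed



lemma comparison_index: "G \<in> carrier_mat n n \<Longrightarrow> j < n \<Longrightarrow> l < n \<Longrightarrow>
  comparison_mat G $$ (j,l) = (if j = l then cmod (G $$ (j,l)) else - cmod (G $$ (j,l)))"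
  unfolding comparison_mat_def by auto

lemma gamma_exists:
  assumes A: "A \<in> carrier_mat n n" and G: "G \<in> carrier_mat n n"
    and cond: "comparison_mat G - abs_mat (G - A) = comparison_mat A"
    and u: "\<forall>l<n. u l > 0"
    and Au: "\<forall>j<n. (\<Sum>l<n. comparison_mat A $$ (j,l) * u l) > 0"
  shows "\<exists>\<gamma>. 0 \<le> \<gamma> \<and> \<gamma> < 1 \<and>
     (\<forall>j<n. (\<Sum>l<n. cmod ((G - A) $$ (j,l)) * u l) \<le> \<gamma> * (\<Sum>l<n. comparison_mat G $$ (j,l) * u l)) \<and>
     (\<forall>j<n. (\<Sum>l<n. comparison_mat G $$ (j,l) * u l) > 0)"
proof -
  define NU where "NU j = (\<Sum>l<n. cmod ((G - A) $$ (j,l)) * u l)" for j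
  define GU where "GU j = (\<Sum>l<n. comparison_mat G $$ (j,l) * u l)" for j
  define AU where "AU j = (\<Sum>l<n. comparison_mat A $$ (j,l) * u l)" for j
  have ent: "comparison_mat G $$ (j,l) = cmod ((G - A) $$ (j,l)) + comparison_mat A $$ (j,l)"
    if "j < n" "l < n" for j l
  proof -
    have "(comparison_mat G - abs_mat (G - A)) $$ (j,l) = comparison_mat A $$ (j,l)" using cond by simp
    moreover have "(comparison_mat G - abs_mat (G - A)) $$ (j,l) =
        comparison_mat G $$ (j,l) - cmod ((G - A) $$ (j,l))"
      using that A G unfolding comparison_mat_def abs_mat_def by auto
    ultimately show ?thesis by simp
  qed
  have GU: "GU j = NU j + AU j" if "j < n" for j
    unfolding GU_def NU_def AU_def using that
    by (simp add: ent distrib_right sum.distrib)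
  have NU0: "NU j \<ge> 0" for j unfolding NU_def using u by (intro sum_nonneg) auto
  have GUpos: "GU j > 0" if "j < n" for j using GU[OF that] NU0[of j] Au that unfolding AU_def by force
  have lt: "NU j / GU j < 1" if "j < n" for j
    using GU[OF that] GUpos[OF that] Au that unfolding AU_def by (simp add: divide_less_eq)
  define \<gamma> where "\<gamma> = Max (insert 0 ((\<lambda>j. NU j / GU j) ` {..<n}))"
  have fin: "finite (insert 0 ((\<lambda>j. NU j / GU j) ` {..<n}))" by auto
  have g0: "\<gamma> \<ge> 0" unfolding \<gamma>_def using fin by (intro Max_ge) auto
  have gle: "NU j / GU j \<le> \<gamma>" if "j < n" for j unfolding \<gamma>_def using fin that by (intro Max_ge) auto
  have "\<gamma> \<in> insert 0 ((\<lambda>j. NU j / GU j) ` {..<n})" unfolding \<gamma>_def using fin by (intro Max_in) auto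
  hence g1: "\<gamma> < 1" using lt by auto
  have "NU j \<le> \<gamma> * GU j" if "j < n" for j
    using gle[OF that] GUpos[OF that] by (simp add: divide_le_eq mult.commute)
  thus ?thesis using g0 g1 GUpos unfolding NU_def GU_def by blast
qed

lemma blk_sum_only_s:
  assumes bp: "block_partition n m p" and s: "s < m"
    and z: "\<forall>q<m. q \<noteq> s \<longrightarrow> (\<forall>l. p q \<le> l \<and> l < p (Suc q) \<longrightarrow> g q l = 0)"
  shows "(\<Sum>q<m. \<Sum>l\<in>{p q..<p (Suc q)}. g q l) = (\<Sum>l\<in>{p s..<p (Suc s)}. g s l)"
proof -
  have "(\<Sum>q<m. \<Sum>l\<in>{p q..<p (Suc q)}. g q l) = (\<Sum>q\<in>{s}. \<Sum>l\<in>{p q..<p (Suc q)}. g q l)"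
  proof (intro sum.mono_neutral_right)
    show "\<forall>q\<in>{..<m} - {s}. (\<Sum>l\<in>{p q..<p (Suc q)}. g q l) = 0"
      using z by (auto intro!: sum.neutral)
  qed (use s in auto)
  thus ?thesis by simp
qed



lemma inv_mat_props:
  assumes "invertible_mat (B :: complex mat)" "B \<in> carrier_mat k k"
  shows "B * inv_mat B = 1\<^sub>m k" "inv_mat B \<in> carrier_mat k k"
proof -
  have ex: "\<exists>C. inverts_mat B C \<and> inverts_mat C B" using assms unfolding invertible_mat_def by auto
  have *: "inverts_mat B (inv_mat B) \<and> inverts_mat (inv_mat B) B"
    unfolding inv_mat_def by (rule someI_ex[OF ex])
  hence e1: "B * inv_mat B = 1\<^sub>m k" and e2: "inv_mat B * B = 1\<^sub>m (dim_row (inv_mat B))"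
    using assms unfolding inverts_mat_def by auto
  show "B * inv_mat B = 1\<^sub>m k" by fact
  have "dim_col (inv_mat B) = k" using arg_cong[OF e1, of dim_col] by simp
  moreover have "dim_row (inv_mat B) = k" using arg_cong[OF e2, of dim_col] assms by simp
  ultimately show "inv_mat B \<in> carrier_mat k k" by auto
qed

lemma stage:
  assumes bp: "block_partition n m p" and A: "A \<in> carrier_mat n n" and G: "G \<in> carrier_mat n n"
    and bd: "block_diagonal p m G" and s: "s < m" and Gns: "invertible_mat (blk_mat p G s s)"
    and GU: "\<forall>j<n. (\<Sum>l<n. comparison_mat G $$ (j,l) * u l) > 0"
    and gam: "\<forall>j<n. (\<Sum>l<n. cmod ((G - A) $$ (j,l)) * u l) \<le> \<gamma> * (\<Sum>l<n. comparison_mat G $$ (j,l) * u l)"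
    and u: "\<forall>l<n. u l > 0"
    and b: "A *\<^sub>v xs = b" and xs: "xs \<in> carrier_vec n"
    and D: "\<forall>q<m. \<forall>l. p q \<le> l \<and> l < p (Suc q) \<longrightarrow> cmod (z q $ l - xs $ l) \<le> D * u l"
    and D0: "D \<ge> 0" and g0: "\<gamma> \<ge> 0"
  shows "\<forall>i<blk_size p s. cmod ((blk_vec p (z s) s + inv_mat (blk_mat p G s s) *\<^sub>v
            (blk_vec p b s - blk_row_sum p m A s (\<lambda>q. blk_vec p (z q) q))) $ i - xs $ (p s + i))
          \<le> \<gamma> * D * u (p s + i)"
proof -
  define bs where "bs = blk_size p s"
  define ps where "ps = p s"
  have psn: "p (Suc s) \<le> n" using bp_le_n[OF bp, of "Suc s"] s by auto
  have bspos: "bs > 0" and psbs: "ps + bs = p (Suc s)"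
    using bp s unfolding bs_def ps_def blk_size_def block_partition_def by auto
  have inblk: "l < bs \<Longrightarrow> ps + l < n" for l using psbs psn by auto
  define Gs where "Gs = blk_mat p G s s"
  have Gs: "Gs \<in> carrier_mat bs bs" unfolding Gs_def bs_def by simp
  define Ci where "Ci = inv_mat Gs"
  have GCi: "Gs * Ci = 1\<^sub>m bs" and Ci: "Ci \<in> carrier_mat bs bs"
    using inv_mat_props[OF Gns[folded Gs_def] Gs] unfolding Ci_def by auto
  define r where "r = blk_vec p b s - blk_row_sum p m A s (\<lambda>q. blk_vec p (z q) q)"
  have r: "r \<in> carrier_vec bs" unfolding r_def bs_def blk_row_sum_def by auto
  define new where "new = blk_vec p (z s) s + Ci *\<^sub>v r"
  define d where "d i = new $ i - xs $ (ps + i)" for i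
  have new_i: "new $ i = z s $ (ps + i) + (Ci *\<^sub>v r) $ i" if "i < bs" for i
    using that Ci r unfolding new_def bs_def ps_def by simp
  have GCr: "Gs *\<^sub>v (Ci *\<^sub>v r) = r"
    using Gs Ci r by (simp add: assoc_mult_mat_vec[symmetric] GCi)
  have bj: "b $ j = (\<Sum>q<m. \<Sum>l\<in>{p q..<p (Suc q)}. A $$ (j,l) * xs $ l)" if "j < n" for j
  proof -
    have "b $ j = (\<Sum>l<n. A $$ (j,l) * xs $ l)"
      using b[symmetric] A xs that by (simp add: scalar_prod_def atLeast0LessThan)
    thus ?thesis using bp_sum[OF bp, of "\<lambda>l. A $$ (j,l) * xs $ l"] by simp
  qed
  have Nent: "(G - A) $$ (j,l) = G $$ (j,l) - A $$ (j,l)" if "j < n" "l < n" for j l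
    using that A G by simp
  have KE: "(\<Sum>l<bs. G $$ (ps + i, ps + l) * d l) =
      (\<Sum>q<m. \<Sum>l\<in>{p q..<p (Suc q)}. (G $$ (ps + i, l) - A $$ (ps + i, l)) * (z q $ l - xs $ l))"
    if i: "i < bs" for i
  proof -
    let ?j = "ps + i"
    have j: "?j < n" using inblk[OF i] .
    have "(\<Sum>l<bs. G $$ (?j, ps + l) * d l) =
      (\<Sum>l<bs. G $$ (?j, ps + l) * (z s $ (ps + l) - xs $ (ps + l))) + (\<Sum>l<bs. Gs $$ (i, l) * (Ci *\<^sub>v r) $ l)"
      unfolding sum.distrib[symmetric] d_def using i
      by (intro sum.cong refl) (simp add: new_i Gs_def bs_def ps_def algebra_simps)
    also have "(\<Sum>l<bs. Gs $$ (i, l) * (Ci *\<^sub>v r) $ l) = r $ i"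
    proof -
      have "(Gs *\<^sub>v (Ci *\<^sub>v r)) $ i = (\<Sum>l<bs. Gs $$ (i, l) * (Ci *\<^sub>v r) $ l)"
        using Gs Ci i by (simp add: scalar_prod_def atLeast0LessThan)
      thus ?thesis using GCr by simp
    qed
    also have "r $ i = b $ ?j - (\<Sum>q<m. \<Sum>l\<in>{p q..<p (Suc q)}. A $$ (?j, l) * z q $ l)"
      unfolding r_def using i blk_row_sum_index[of i p s m A z] b A
      by (simp add: bs_def ps_def blk_row_sum_def)
    also have "(\<Sum>l<bs. G $$ (?j, ps + l) * (z s $ (ps + l) - xs $ (ps + l))) =
        (\<Sum>q<m. \<Sum>l\<in>{p q..<p (Suc q)}. G $$ (?j, l) * (z q $ l - xs $ l))"
    proof -
      have "(\<Sum>l<bs. G $$ (?j, ps + l) * (z s $ (ps + l) - xs $ (ps + l))) =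
          (\<Sum>l\<in>{p s..<p (Suc s)}. G $$ (?j, l) * (z s $ l - xs $ l))"
        using sum_shift_ivl[of "\<lambda>l. G $$ (?j, l) * (z s $ l - xs $ l)" ps bs] psbs
        unfolding ps_def by simp
      also have "\<dots> = (\<Sum>q<m. \<Sum>l\<in>{p q..<p (Suc q)}. G $$ (?j, l) * (z q $ l - xs $ l))"
        by (rule bd_row_sum[OF bp G bd s, symmetric]) (use i psbs in \<open>auto simp: ps_def\<close>)
      finally show ?thesis .
    qed
    also note bj[OF j]
    finally show ?thesis
      by (simp add: algebra_simps sum.distrib sum_subtractf)
  qed
  have KEbound: "cmod (\<Sum>l<bs. G $$ (ps + i, ps + l) * d l) \<le>
      \<gamma> * D * (\<Sum>l<n. comparison_mat G $$ (ps + i, l) * u l)" if i: "i < bs" for i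
  proof -
    let ?j = "ps + i"
    have j: "?j < n" using inblk[OF i] .
    have "cmod (\<Sum>l<bs. G $$ (ps + i, ps + l) * d l) \<le>
       (\<Sum>q<m. \<Sum>l\<in>{p q..<p (Suc q)}. cmod (G $$ (?j, l) - A $$ (?j, l)) * (D * u l))"
      unfolding KE[OF i]
    proof (rule order.trans[OF norm_sum sum_mono], rule order.trans[OF norm_sum sum_mono])
      fix q l assume q: "q \<in> {..<m}" and l: "l \<in> {p q..<p (Suc q)}"
      show "cmod ((G $$ (?j, l) - A $$ (?j, l)) * (z q $ l - xs $ l)) \<le> cmod (G $$ (?j, l) - A $$ (?j, l)) * (D * u l)"
        unfolding norm_mult using D q l by (intro mult_left_mono) auto
    qed
    also have "\<dots> = D * (\<Sum>l<n. cmod ((G - A) $$ (?j, l)) * u l)"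
    proof -
      have "(\<Sum>q<m. \<Sum>l\<in>{p q..<p (Suc q)}. cmod (G $$ (?j, l) - A $$ (?j, l)) * (D * u l)) =
          (\<Sum>q<m. \<Sum>l\<in>{p q..<p (Suc q)}. D * (cmod ((G - A) $$ (?j, l)) * u l))"
      proof (intro sum.cong refl)
        fix q l assume q: "q \<in> {..<m}" and l: "l \<in> {p q..<p (Suc q)}"
        have "p (Suc q) \<le> n" using bp_le_n[OF bp, of "Suc q"] q by auto
        hence "l < n" using l by auto
        thus "cmod (G $$ (?j, l) - A $$ (?j, l)) * (D * u l) = D * (cmod ((G - A) $$ (?j, l)) * u l)"
          using Nent[OF j] by simp
      qed
      also have "\<dots> = D * (\<Sum>l<n. cmod ((G - A) $$ (?j, l)) * u l)"
        unfolding sum_distrib_left[symmetric] bp_sum[OF bp] ..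
      finally show ?thesis .
    qed
    also have "\<dots> \<le> D * (\<gamma> * (\<Sum>l<n. comparison_mat G $$ (?j, l) * u l))"
      using gam j D0 by (intro mult_left_mono) auto
    finally show ?thesis by (simp add: mult.assoc mult.left_commute)
  qed
  define f where "f i = cmod (d i) / u (ps + i)" for i
  have finf: "finite (f ` {..<bs})" "f ` {..<bs} \<noteq> {}" using bspos by auto
  obtain i0 where i0: "i0 < bs" and fi0: "f i0 = Max (f ` {..<bs})"
    using Max_in[OF finf] by auto
  have fmax: "f i \<le> f i0" if "i < bs" for i using Max_ge[OF finf(1)] that fi0 by auto
  define t where "t = f i0"
  let ?j0 = "ps + i0"
  have j0: "?j0 < n" using inblk[OF i0] .
  have u0: "u ?j0 > 0" using u j0 by auto
  have dl: "cmod (d l) \<le> t * u (ps + l)" if "l < bs" for l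
    using fmax[OF that] u inblk[OF that] unfolding t_def f_def by (simp add: divide_le_eq)
  have di0: "cmod (d i0) = t * u ?j0" unfolding t_def f_def using u0 by simp
  let ?R = "{..<bs} - {i0}"
  have GUj0: "(\<Sum>l<n. comparison_mat G $$ (?j0, l) * u l) =
      cmod (G $$ (?j0, ?j0)) * u ?j0 - (\<Sum>l\<in>?R. cmod (G $$ (?j0, ps + l)) * u (ps + l))"
  proof -
    have "(\<Sum>l<n. comparison_mat G $$ (?j0, l) * u l) =
        (\<Sum>q<m. \<Sum>l\<in>{p q..<p (Suc q)}. comparison_mat G $$ (?j0, l) * u l)"
      using bp_sum[OF bp, of "\<lambda>l. comparison_mat G $$ (?j0, l) * u l"] by simp
    also have "\<dots> = (\<Sum>l\<in>{p s..<p (Suc s)}. comparison_mat G $$ (?j0, l) * u l)"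
    proof (rule blk_sum_only_s[OF bp s], intro allI impI)
      fix q l assume q: "q < m" "q \<noteq> s" and l: "p q \<le> l \<and> l < p (Suc q)"
      have "p (Suc q) \<le> n" using bp_le_n[OF bp, of "Suc q"] q by auto
      hence ln: "l < n" using l by auto
      have "G $$ (?j0, l) = 0"
        using bd_zero[OF bp G bd s, of q ?j0 l] q l i0 psbs unfolding ps_def by auto
      thus "comparison_mat G $$ (?j0, l) * u l = 0" using comparison_index[OF G j0 ln] by (simp split: if_splits)
    qed
    also have "\<dots> = (\<Sum>l<bs. comparison_mat G $$ (?j0, ps + l) * u (ps + l))"
      using sum_shift_ivl[of "\<lambda>l. comparison_mat G $$ (?j0, l) * u l" ps bs] psbs
      unfolding ps_def by simp
    also have "\<dots> = comparison_mat G $$ (?j0, ps + i0) * u (ps + i0) +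
        (\<Sum>l\<in>?R. comparison_mat G $$ (?j0, ps + l) * u (ps + l))"
      using i0 by (subst sum.remove[of _ i0]) auto
    also have "(\<Sum>l\<in>?R. comparison_mat G $$ (?j0, ps + l) * u (ps + l)) =
        (\<Sum>l\<in>?R. - (cmod (G $$ (?j0, ps + l)) * u (ps + l)))"
      by (intro sum.cong refl) (use inblk j0 in \<open>auto simp: comparison_index[OF G]\<close>)
    finally show ?thesis using comparison_index[OF G j0 j0] by (simp add: sum_negf)
  qed
  have "cmod (G $$ (?j0, ?j0)) * cmod (d i0) \<le>
      \<gamma> * D * (\<Sum>l<n. comparison_mat G $$ (?j0, l) * u l) + (\<Sum>l\<in>?R. cmod (G $$ (?j0, ps + l)) * cmod (d l))"
  proof -
    have split: "(\<Sum>l<bs. G $$ (?j0, ps + l) * d l) = G $$ (?j0, ?j0) * d i0 + (\<Sum>l\<in>?R. G $$ (?j0, ps + l) * d l)"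
      using i0 by (subst sum.remove[of _ i0]) auto
    have "cmod (G $$ (?j0, ?j0) * d i0) \<le> cmod (\<Sum>l<bs. G $$ (?j0, ps + l) * d l) + cmod (\<Sum>l\<in>?R. G $$ (?j0, ps + l) * d l)"
    proof -
      have "G $$ (?j0, ?j0) * d i0 = (\<Sum>l<bs. G $$ (?j0, ps + l) * d l) - (\<Sum>l\<in>?R. G $$ (?j0, ps + l) * d l)"
        unfolding split by simp
      thus ?thesis using norm_triangle_ineq4 by metis
    qed
    also have "cmod (\<Sum>l\<in>?R. G $$ (?j0, ps + l) * d l) \<le> (\<Sum>l\<in>?R. cmod (G $$ (?j0, ps + l)) * cmod (d l))"
      by (rule order.trans[OF norm_sum]) (simp add: norm_mult)
    finally show ?thesis using KEbound[OF i0] by (simp add: norm_mult)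
  qed
  also have "(\<Sum>l\<in>?R. cmod (G $$ (?j0, ps + l)) * cmod (d l)) \<le> (\<Sum>l\<in>?R. cmod (G $$ (?j0, ps + l)) * (t * u (ps + l)))"
    using dl by (intro sum_mono mult_left_mono) auto
  finally have "t * (cmod (G $$ (?j0, ?j0)) * u ?j0 - (\<Sum>l\<in>?R. cmod (G $$ (?j0, ps + l)) * u (ps + l)))
      \<le> \<gamma> * D * (\<Sum>l<n. comparison_mat G $$ (?j0, l) * u l)"
    unfolding di0 by (simp add: algebra_simps sum_distrib_left)
  hence "t * (\<Sum>l<n. comparison_mat G $$ (?j0, l) * u l) \<le> (\<gamma> * D) * (\<Sum>l<n. comparison_mat G $$ (?j0, l) * u l)"
    unfolding GUj0 by simp
  hence tle: "t \<le> \<gamma> * D" using GU j0 by (simp add: mult_le_cancel_right)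
  show ?thesis
  proof (intro allI impI)
    fix i assume i: "i < blk_size p s"
    hence i': "i < bs" unfolding bs_def .
    have "cmod (new $ i - xs $ (ps + i)) = cmod (d i)" unfolding d_def ..
    also have "\<dots> \<le> t * u (ps + i)" by (rule dl[OF i'])
    also have "\<dots> \<le> \<gamma> * D * u (ps + i)" using tle u inblk[OF i'] by (intro mult_right_mono) auto
    finally show "cmod ((blk_vec p (z s) s + inv_mat (blk_mat p G s s) *\<^sub>v
            (blk_vec p b s - blk_row_sum p m A s (\<lambda>q. blk_vec p (z q) q))) $ i - xs $ (p s + i))
          \<le> \<gamma> * D * u (p s + i)"
      unfolding new_def Ci_def Gs_def r_def ps_def .
  qed
qed



lemma pow_smult_mat:
  assumes "(A :: 'a :: comm_ring_1 mat) \<in> carrier_mat n n"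
  shows "(c \<cdot>\<^sub>m A) ^\<^sub>m k = c ^ k \<cdot>\<^sub>m (A ^\<^sub>m k)"
proof (induction k)
  case 0
  then show ?case by (intro eq_matI) auto
next
  case (Suc k)
  have "(c \<cdot>\<^sub>m A) ^\<^sub>m Suc k = (c ^ k \<cdot>\<^sub>m (A ^\<^sub>m k)) * (c \<cdot>\<^sub>m A)" using Suc by simp
  also have "\<dots> = c ^ k \<cdot>\<^sub>m ((A ^\<^sub>m k) * (c \<cdot>\<^sub>m A))"
    using assms by (intro mult_smult_assoc_mat) auto
  also have "\<dots> = c ^ k \<cdot>\<^sub>m (c \<cdot>\<^sub>m ((A ^\<^sub>m k) * A))"
    using assms by (subst mult_smult_distrib) auto
  also have "\<dots> = c ^ Suc k \<cdot>\<^sub>m (A ^\<^sub>m Suc k)"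
    by (intro eq_matI) auto
  finally show ?case .
qed

lemma pow_mat_Suc_left:
  assumes "(A :: 'a :: semiring_1 mat) \<in> carrier_mat n n"
  shows "A ^\<^sub>m Suc k = A * A ^\<^sub>m k"
proof (induction k)
  case 0
  then show ?case using assms by simp
next
  case (Suc k)
  have "A ^\<^sub>m Suc (Suc k) = (A * A ^\<^sub>m k) * A" using Suc by simp
  also have "\<dots> = A * (A ^\<^sub>m k * A)"
    using assms by (intro assoc_mult_mat) auto
  finally show ?case by simp
qed

lemma pow_nonneg_mat:
  assumes "(R :: real mat) \<in> carrier_mat n n" "\<forall>i<n. \<forall>j<n. R $$ (i,j) \<ge> 0"
  shows "i < n \<Longrightarrow> j < n \<Longrightarrow> (R ^\<^sub>m k) $$ (i,j) \<ge> 0"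
proof (induction k arbitrary: i j)
  case 0
  then show ?case using assms(1) by auto
next
  case (Suc k)
  have "(R ^\<^sub>m Suc k) $$ (i,j) = (\<Sum>l<n. (R ^\<^sub>m k) $$ (i,l) * R $$ (l,j))"
    using assms Suc.prems by (simp add: scalar_prod_def atLeast0LessThan)
  also have "\<dots> \<ge> 0" using Suc assms by (intro sum_nonneg mult_nonneg_nonneg) auto
  finally show ?case .
qed

lemma H_pos_vec:
  assumes A: "A \<in> carrier_mat n n" and H: "H_matrix A" and n: "n > 0"
  shows "\<exists>u::nat\<Rightarrow>real. (\<forall>i<n. u i > 0) \<and>
           (\<forall>i<n. (\<Sum>j<n. comparison_mat A $$ (i,j) * u j) > 0)"
proof -
  define Cm where "Cm = comparison_mat A"
  have Cm: "Cm \<in> carrier_mat n n" using A unfolding Cm_def comparison_mat_def by auto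
  from H obtain \<alpha> where
    nonneg: "\<forall>i<n. \<forall>j<n. (\<alpha> \<cdot>\<^sub>m 1\<^sub>m n - Cm) $$ (i,j) \<ge> 0" and
    lt: "\<alpha> > spectral_radius (map_mat complex_of_real (\<alpha> \<cdot>\<^sub>m 1\<^sub>m n - Cm))"
    unfolding H_matrix_def M_matrix_def Cm_def[symmetric] using Cm by auto
  define Bre where "Bre = \<alpha> \<cdot>\<^sub>m 1\<^sub>m n - Cm"
  define Bc where "Bc = map_mat complex_of_real Bre"
  define \<rho> where "\<rho> = spectral_radius Bc"
  have Bre: "Bre \<in> carrier_mat n n" using Cm unfolding Bre_def by auto
  have Bc: "Bc \<in> carrier_mat n n" using Bre unfolding Bc_def by auto
  have "\<rho> \<in> norm ` spectrum Bc" unfolding \<rho>_def by (rule spectral_radius_mem_max(1)[OF Bc n])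
  hence rho0: "\<rho> \<ge> 0" by auto
  have rhoa: "\<rho> < \<alpha>" using lt unfolding \<rho>_def Bc_def Bre_def by simp
  define r where "r = (\<rho> + \<alpha>) / 2"
  have r: "\<rho> < r" "r < \<alpha>" "r > 0" "\<alpha> > 0" using rho0 rhoa unfolding r_def by auto
  define R' where "R' = (1/r) \<cdot>\<^sub>m Bre"
  have R': "R' \<in> carrier_mat n n" using Bre unfolding R'_def by auto
  define Cc where "Cc = map_mat complex_of_real R'"
  have Cc: "Cc \<in> carrier_mat n n" using R' unfolding Cc_def by auto
  have BcCc: "Bc $$ (i,j) = of_real r * Cc $$ (i,j)" if "i < n" "j < n" for i j
    using that Bre r unfolding Bc_def Cc_def R'_def by auto
  have "spectral_radius Cc < 1"
  proof -
    have "spectral_radius Cc \<in> norm ` spectrum Cc" by (rule spectral_radius_mem_max(1)[OF Cc n])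
    then obtain lam where lam: "eigenvalue Cc lam" and eq: "spectral_radius Cc = norm lam"
      unfolding spectrum_def by auto
    from lam obtain v where v: "eigenvector Cc v lam" unfolding eigenvalue_def by auto
    have vc: "v \<in> carrier_vec n" and v0: "v \<noteq> 0\<^sub>v n" and ev: "Cc *\<^sub>v v = lam \<cdot>\<^sub>v v"
      using v Cc unfolding eigenvector_def by auto
    have "Bc *\<^sub>v v = (of_real r * lam) \<cdot>\<^sub>v v"
    proof (intro eq_vecI)
      fix i assume "i < dim_vec ((of_real r * lam) \<cdot>\<^sub>v v)"
      hence i: "i < n" using vc by auto
      have "(Bc *\<^sub>v v) $ i = (\<Sum>j<n. Bc $$ (i,j) * v $ j)"
        using Bc vc i by (simp add: scalar_prod_def atLeast0LessThan)
      also have "\<dots> = of_real r * (\<Sum>j<n. Cc $$ (i,j) * v $ j)"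
        using i by (simp add: BcCc sum_distrib_left mult.assoc)
      also have "(\<Sum>j<n. Cc $$ (i,j) * v $ j) = (Cc *\<^sub>v v) $ i"
        using Cc vc i by (simp add: scalar_prod_def atLeast0LessThan)
      also have "\<dots> = lam * v $ i" using ev i vc by simp
      finally show "(Bc *\<^sub>v v) $ i = ((of_real r * lam) \<cdot>\<^sub>v v) $ i" using i vc by simp
    qed (use Bc vc in auto)
    hence "eigenvector Bc v (of_real r * lam)" using vc v0 Bc unfolding eigenvector_def by auto
    hence "norm (of_real r * lam) \<in> norm ` spectrum Bc" unfolding spectrum_def eigenvalue_def by auto
    hence "norm (of_real r * lam) \<le> \<rho>" unfolding \<rho>_def by (rule spectral_radius_mem_max(2)[OF Bc n])
    hence "r * norm lam \<le> \<rho>" using r by (simp add: norm_mult)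
    hence "norm lam \<le> \<rho> / r" using r by (simp add: field_simps)
    also have "\<rho> / r < 1" using r by simp
    finally have "norm lam < 1" .
    thus ?thesis using eq by simp
  qed
  from spectral_radius_jnf_norm_bound_less_1_upper_triangular[OF Cc this]
  obtain c where c: "\<And>k. norm_bound (Cc ^\<^sub>m k) c" by auto
  have R'k: "\<bar>(R' ^\<^sub>m k) $$ (i,j)\<bar> \<le> c" if "i < n" "j < n" for i j k
  proof -
    have "Cc ^\<^sub>m k = map_mat complex_of_real (R' ^\<^sub>m k)"
      unfolding Cc_def by (rule of_real_hom.mat_hom_pow[OF R', symmetric])
    with c[of k] that R' show ?thesis unfolding norm_bound_def by auto
  qed
  have R'nn: "\<forall>i<n. \<forall>j<n. R' $$ (i,j) \<ge> 0"
  proof (intro allI impI)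
    fix i j assume ij: "i < n" "j < n"
    have "R' $$ (i,j) = (1/r) * Bre $$ (i,j)" using ij Bre unfolding R'_def by simp
    also have "\<dots> \<ge> 0" using nonneg ij r unfolding Bre_def by simp
    finally show "R' $$ (i,j) \<ge> 0" .
  qed
  define R where "R = (r/\<alpha>) \<cdot>\<^sub>m R'"
  have R: "R \<in> carrier_mat n n" using R' unfolding R_def by auto
  have Rk: "R ^\<^sub>m k = (r/\<alpha>)^k \<cdot>\<^sub>m (R' ^\<^sub>m k)" for k
    unfolding R_def by (rule pow_smult_mat[OF R'])
  have Rk_nn: "(R ^\<^sub>m k) $$ (i,j) \<ge> 0" if "i < n" "j < n" for i j k
    using pow_nonneg_mat[OF R' R'nn that, of k] that r R' by (simp add: Rk)
  have Rk_le: "(R ^\<^sub>m k) $$ (i,j) \<le> (r/\<alpha>)^k * c" if "i < n" "j < n" for i j k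
  proof -
    have "(R ^\<^sub>m k) $$ (i,j) = (r/\<alpha>)^k * (R' ^\<^sub>m k) $$ (i,j)" using that R' by (simp add: Rk)
    also have "\<dots> \<le> (r/\<alpha>)^k * c" using R'k[OF that, of k] r
      by (intro mult_left_mono) auto
    finally show ?thesis .
  qed
  have CmR: "Cm $$ (i,j) = \<alpha> * ((if i = j then 1 else 0) - R $$ (i,j))" if "i < n" "j < n" for i j
    using that r Cm unfolding R_def R'_def Bre_def by (auto simp: field_simps)
  define c1 where "c1 = \<bar>c\<bar> + 1"
  have c1: "c1 > 0" "c \<le> c1" unfolding c1_def by auto
  obtain K where K: "(r/\<alpha>)^K < 1 / (c1 * n)"
    using real_arch_pow_inv[of "1/(c1 * n)" "r/\<alpha>"] c1 n r by auto
  define S where "S k i = (\<Sum>l<n. (R ^\<^sub>m k) $$ (i,l))" for k i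
  have S0: "S 0 i = 1" if "i < n" for i
  proof -
    have "S 0 i = (\<Sum>l<n. if i = l then 1 else 0)"
      unfolding S_def using that R by (intro sum.cong refl) auto
    thus ?thesis using that by simp
  qed
  have SSuc: "S (Suc k) i = (\<Sum>j<n. R $$ (i,j) * S k j)" if "i < n" for k i
  proof -
    have "S (Suc k) i = (\<Sum>l<n. \<Sum>j<n. R $$ (i,j) * (R ^\<^sub>m k) $$ (j,l))"
      unfolding S_def pow_mat_Suc_left[OF R] using that R
      by (intro sum.cong refl) (simp add: scalar_prod_def atLeast0LessThan)
    also have "\<dots> = (\<Sum>j<n. R $$ (i,j) * S k j)"
      unfolding S_def by (subst sum.swap) (simp add: sum_distrib_left)
    finally show ?thesis .
  qed
  have SK: "S K i < 1" if "i < n" for i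
  proof -
    have "S K i \<le> (\<Sum>l<n. (r/\<alpha>)^K * c1)"
      unfolding S_def using Rk_le[OF that] c1 r
      by (intro sum_mono) (smt (verit, ccfv_SIG) lessThan_iff mult_left_mono zero_le_divide_iff zero_le_power)
    also have "\<dots> = n * ((r/\<alpha>)^K * c1)" by simp
    also have "\<dots> < 1"
    proof -
      have "(r/\<alpha>)^K * (c1 * n) < 1" using K c1 n by (simp add: less_divide_eq)
      thus ?thesis by (simp add: algebra_simps)
    qed
    finally show ?thesis .
  qed
  define u where "u i = (1/\<alpha>) * (\<Sum>k<K. S k i)" for i
  have Snn: "S k i \<ge> 0" if "i < n" for k i
    unfolding S_def using Rk_nn that by (intro sum_nonneg) auto
  have "K \<noteq> 0"
  proof
    assume "K = 0"
    with K have "1 < 1 / (c1 * n)" by simp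
    moreover have "c1 * n \<ge> 1"
    proof -
      have "1 \<le> c1" unfolding c1_def by simp
      moreover have "1 \<le> real n" using n by simp
      ultimately show ?thesis using mult_mono[of 1 c1 1 "real n"] by simp
    qed
    ultimately show False by (simp add: divide_less_eq)
  qed
  have upos: "u i > 0" if "i < n" for i
  proof -
    have "(\<Sum>k<K. S k i) \<ge> S 0 i"
      using \<open>K \<noteq> 0\<close> Snn[OF that] by (intro member_le_sum) auto
    thus ?thesis using S0[OF that] r unfolding u_def by auto
  qed
  have "(\<Sum>j<n. Cm $$ (i,j) * u j) > 0" if i: "i < n" for i
  proof -
    have "(\<Sum>j<n. Cm $$ (i,j) * u j) = (\<Sum>j<n. ((if i = j then 1 else 0) - R $$ (i,j)) * (\<Sum>k<K. S k j))"
      using r i unfolding u_def by (intro sum.cong refl) (simp add: CmR)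
    also have "\<dots> = (\<Sum>k<K. \<Sum>j<n. ((if i = j then 1 else 0) - R $$ (i,j)) * S k j)"
      by (simp add: sum_distrib_left sum.swap[of _ "{..<K}"])
    also have "\<dots> = (\<Sum>k<K. S k i - S (Suc k) i)"
    proof (intro sum.cong refl)
      fix k
      have "(\<Sum>j<n. ((if i = j then 1 else 0) - R $$ (i,j)) * S k j)
          = (\<Sum>j<n. (if i = j then S k j else 0) - R $$ (i,j) * S k j)"
        by (intro sum.cong refl) (auto simp: algebra_simps)
      also have "\<dots> = S k i - S (Suc k) i"
        using i by (simp add: SSuc sum_subtractf)
      finally show "(\<Sum>j<n. ((if i = j then 1 else 0) - R $$ (i,j)) * S k j) = S k i - S (Suc k) i" .
    qed
    also have "\<dots> = S 0 i - S K i" by (rule sum_lessThan_telescope')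
    also have "\<dots> > 0" using S0[OF i] SK[OF i] by simp
    finally show ?thesis .
  qed
  thus ?thesis using upos unfolding Cm_def by blast
qed



lemma delay_lemma:
  fixes m :: nat and \<delta> :: "nat \<Rightarrow> nat \<Rightarrow> nat \<Rightarrow> nat"
  assumes "\<forall>s<m. \<forall>q<m. filterlim (\<lambda>k. \<delta> s q k) at_top sequentially"
  shows "\<exists>K1. \<forall>t\<ge>K1. \<forall>s<m. \<forall>q<m. K \<le> (\<delta> s q t :: nat)"
proof -
  have "\<forall>y\<in>{..<m}\<times>{..<m}. eventually (\<lambda>t. K \<le> \<delta> (fst y) (snd y) t) sequentially"
    using assms unfolding filterlim_at_top by auto
  hence "eventually (\<lambda>t. \<forall>y\<in>{..<m}\<times>{..<m}. K \<le> \<delta> (fst y) (snd y) t) sequentially"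
    by (intro eventually_ball_finite) (auto intro: finite_cartesian_product)
  then obtain N where "\<forall>t\<ge>N. \<forall>y\<in>{..<m}\<times>{..<m}. K \<le> \<delta> (fst y) (snd y) t"
    unfolding eventually_sequentially by auto
  thus ?thesis by force
qed

lemma max_ratio:
  fixes f :: "nat \<Rightarrow> real"
  assumes "\<forall>l<n. u l > 0"
  shows "\<exists>D\<ge>0. \<forall>l<n. f l \<le> D * u l"
proof -
  define D where "D = Max (insert 0 ((\<lambda>l. f l / u l) ` {..<n}))"
  have fin: "finite (insert 0 ((\<lambda>l. f l / u l) ` {..<n}))" by auto
  have "D \<ge> 0" unfolding D_def using fin by (intro Max_ge) auto
  moreover have "f l \<le> D * u l" if "l < n" for l
  proof -
    have "f l / u l \<le> D" unfolding D_def using fin that by (intro Max_ge) auto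
    thus ?thesis using assms that by (simp add: divide_le_eq)
  qed
  ultimately show ?thesis by blast
qed


lemma smult_mat_vec:
  assumes "X \<in> carrier_mat n n" "v \<in> carrier_vec n"
  shows "((c::complex) \<cdot>\<^sub>m X) *\<^sub>v v = c \<cdot>\<^sub>v (X *\<^sub>v v)"
  using assms by (intro eq_vecI) (auto simp: scalar_prod_def sum_distrib_left mult.assoc)

lemma geo_le_zero:
  fixes a C \<gamma> :: real
  assumes "0 \<le> \<gamma>" "\<gamma> < 1" "\<forall>k. a \<le> \<gamma>^k * C"
  shows "a \<le> 0"
proof (rule ccontr)
  assume a: "\<not> a \<le> 0"
  have "a \<le> C" using assms(3)[rule_format, of 0] by simp
  hence C: "C > 0" using a by simp
  obtain k where "\<gamma>^k < a / C" using real_arch_pow_inv[of "a/C" \<gamma>] a C assms by auto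
  hence "\<gamma>^k * C < a" using C by (simp add: less_divide_eq)
  thus False using assms(3) by (meson not_le)
qed

theorem corollary2:
  fixes n m :: nat and p :: "nat \<Rightarrow> nat"
    and A M F :: "complex mat" and b :: "complex vec"
    and \<Omega> :: "nat \<Rightarrow> nat set" and \<delta> :: "nat \<Rightarrow> nat \<Rightarrow> nat \<Rightarrow> nat"
    and x y :: "nat \<Rightarrow> complex vec"
  assumes A: "A \<in> carrier_mat n n" and b: "b \<in> carrier_vec n"
    and M: "M \<in> carrier_mat n n" and F: "F \<in> carrier_mat n n"
    and M_ns: "invertible_mat M" and F_ns: "invertible_mat F"
    and part: "block_partition n m p"
    and M_bd: "block_diagonal p m M" and F_bd: "block_diagonal p m F"
    and M_blk_ns: "\<forall>s<m. invertible_mat (blk_mat p M s s)"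
    and F_blk_ns: "\<forall>s<m. invertible_mat (blk_mat p F s s)"
    and \<Omega>_sub: "\<forall>k. \<Omega> k \<subseteq> {..<m}"
    and \<Omega>_inf: "\<forall>s<m. infinite {k. s \<in> \<Omega> k}"
    and \<delta>_le: "\<forall>s<m. \<forall>q<m. \<forall>k. \<delta> s q k \<le> k"
    and \<delta>_lim: "\<forall>s<m. \<forall>q<m. filterlim (\<lambda>k. \<delta> s q k) at_top sequentially"
    and x0: "x 0 \<in> carrier_vec n"
    and x_dim: "\<forall>k. x (Suc k) \<in> carrier_vec n"
    and y_dim: "\<forall>k. y k \<in> carrier_vec n"
    and y_def: "\<forall>k. \<forall>s<m. blk_vec p (y k) s =
        blk_vec p (x (\<delta> s s k)) s +
        inv_mat (blk_mat p M s s) *\<^sub>v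
          (blk_vec p b s - blk_row_sum p m A s (\<lambda>q. blk_vec p (x (\<delta> s q k)) q))"
    and x_def: "\<forall>k. \<forall>s<m. blk_vec p (x (Suc k)) s =
        (if s \<in> \<Omega> k then
           blk_vec p (y (\<delta> s s k)) s +
           inv_mat (blk_mat p F s s) *\<^sub>v
             (blk_vec p b s - blk_row_sum p m A s (\<lambda>q. blk_vec p (y (\<delta> s q k)) q))
         else blk_vec p (x k) s)"
    and H: "H_matrix A"
    and condM: "comparison_mat M - abs_mat (M - A) = comparison_mat A"
    and condF: "comparison_mat F - abs_mat (F - A) = comparison_mat A"
  shows "(\<exists>xs \<in> carrier_vec n. A *\<^sub>v xs = b) \<and>
         (\<forall>xs \<in> carrier_vec n. A *\<^sub>v xs = b \<longrightarrow>
            (\<forall>i<n. (\<lambda>k. x k $ i) \<longlonglongrightarrow> xs $ i))"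

proof -
  have xc: "x k \<in> carrier_vec n" for k using x0 x_dim by (cases k) auto
  show ?thesis
  proof (cases "n = 0")
    case True
    have "A *\<^sub>v 0\<^sub>v n = b" using A b True by (intro eq_vecI) auto
    thus ?thesis using True by auto
  next
    case False
    hence n: "n > 0" by simp
    obtain u where u: "\<forall>i<n. u i > 0"
      and Au: "\<forall>i<n. (\<Sum>j<n. comparison_mat A $$ (i,j) * u j) > 0"
      using H_pos_vec[OF A H n] by blast
    obtain \<gamma>M where gM0: "0 \<le> \<gamma>M" "\<gamma>M < 1"
      and gM: "\<forall>j<n. (\<Sum>l<n. cmod ((M - A) $$ (j,l)) * u l) \<le> \<gamma>M * (\<Sum>l<n. comparison_mat M $$ (j,l) * u l)"
      and GUM: "\<forall>j<n. (\<Sum>l<n. comparison_mat M $$ (j,l) * u l) > 0"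
      using gamma_exists[OF A M condM u Au] by blast
    obtain \<gamma>F where gF0: "0 \<le> \<gamma>F" "\<gamma>F < 1"
      and gF: "\<forall>j<n. (\<Sum>l<n. cmod ((F - A) $$ (j,l)) * u l) \<le> \<gamma>F * (\<Sum>l<n. comparison_mat F $$ (j,l) * u l)"
      and GUF: "\<forall>j<n. (\<Sum>l<n. comparison_mat F $$ (j,l) * u l) > 0"
      using gamma_exists[OF A F condF u Au] by blast
    define \<gamma> where "\<gamma> = max \<gamma>M \<gamma>F"
    have g0: "0 \<le> \<gamma>" "\<gamma> < 1" using gM0 gF0 unfolding \<gamma>_def by auto
    have gM': "\<forall>j<n. (\<Sum>l<n. cmod ((M - A) $$ (j,l)) * u l) \<le> \<gamma> * (\<Sum>l<n. comparison_mat M $$ (j,l) * u l)"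
    proof (intro allI impI)
      fix j assume j: "j < n"
      have "\<gamma>M * (\<Sum>l<n. comparison_mat M $$ (j,l) * u l) \<le> \<gamma> * (\<Sum>l<n. comparison_mat M $$ (j,l) * u l)"
        using GUM j unfolding \<gamma>_def by (intro mult_right_mono) auto
      thus "(\<Sum>l<n. cmod ((M - A) $$ (j,l)) * u l) \<le> \<gamma> * (\<Sum>l<n. comparison_mat M $$ (j,l) * u l)"
        using gM j by force
    qed
    have gF': "\<forall>j<n. (\<Sum>l<n. cmod ((F - A) $$ (j,l)) * u l) \<le> \<gamma> * (\<Sum>l<n. comparison_mat F $$ (j,l) * u l)"
    proof (intro allI impI)
      fix j assume j: "j < n"
      have "\<gamma>F * (\<Sum>l<n. comparison_mat F $$ (j,l) * u l) \<le> \<gamma> * (\<Sum>l<n. comparison_mat F $$ (j,l) * u l)"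
        using GUF j unfolding \<gamma>_def by (intro mult_right_mono) auto
      thus "(\<Sum>l<n. cmod ((F - A) $$ (j,l)) * u l) \<le> \<gamma> * (\<Sum>l<n. comparison_mat F $$ (j,l) * u l)"
        using gF j by force
    qed
    have blk_n: "l < n" if "q < m" "l < p (Suc q)" for q l
      using bp_le_n[OF part, of "Suc q"] that by auto
    have stM: "\<forall>i<blk_size p s. cmod ((blk_vec p (z s) s + inv_mat (blk_mat p M s s) *\<^sub>v
            (blk_vec p b' s - blk_row_sum p m A s (\<lambda>q. blk_vec p (z q) q))) $ i - xs' $ (p s + i))
          \<le> \<gamma> * D * u (p s + i)"
      if "s < m" "A *\<^sub>v xs' = b'" "xs' \<in> carrier_vec n"
        "\<forall>q<m. \<forall>l. p q \<le> l \<and> l < p (Suc q) \<longrightarrow> cmod (z q $ l - xs' $ l) \<le> D * u l" "D \<ge> 0"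
      for s xs' b' z D
      using stage[OF part A M M_bd that(1) _ GUM gM' u that(2,3,4,5) g0(1)] M_blk_ns that(1) by blast
    have stF: "\<forall>i<blk_size p s. cmod ((blk_vec p (z s) s + inv_mat (blk_mat p F s s) *\<^sub>v
            (blk_vec p b' s - blk_row_sum p m A s (\<lambda>q. blk_vec p (z q) q))) $ i - xs' $ (p s + i))
          \<le> \<gamma> * D * u (p s + i)"
      if "s < m" "A *\<^sub>v xs' = b'" "xs' \<in> carrier_vec n"
        "\<forall>q<m. \<forall>l. p q \<le> l \<and> l < p (Suc q) \<longrightarrow> cmod (z q $ l - xs' $ l) \<le> D * u l" "D \<ge> 0"
      for s xs' b' z D
      using stage[OF part A F F_bd that(1) _ GUF gF' u that(2,3,4,5) g0(1)] F_blk_ns that(1) by blast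
    have inj: "v = 0\<^sub>v n" if v: "v \<in> carrier_vec n" and Av: "A *\<^sub>v v = 0\<^sub>v n" for v
    proof -
      have step: "\<forall>l<n. cmod (v $ l) \<le> \<gamma> * D * u l"
        if D0: "D \<ge> 0" and Dv: "\<forall>l<n. cmod (v $ l) \<le> D * u l" for D
      proof (intro allI impI)
        fix l assume l: "l < n"
        obtain s where s: "s < m" "p s \<le> l" "l < p (Suc s)" using bp_cover[OF part l] by auto
        define i where "i = l - p s"
        have i: "i < blk_size p s" "p s + i = l" using s unfolding i_def blk_size_def by auto
        have hyp: "\<forall>q<m. \<forall>l. p q \<le> l \<and> l < p (Suc q) \<longrightarrow> cmod ((0\<^sub>v n) $ l - v $ l) \<le> D * u l"
          using Dv blk_n by auto
        from stM[OF s(1) Av v hyp D0] i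
        have *: "cmod ((blk_vec p (0\<^sub>v n) s + inv_mat (blk_mat p M s s) *\<^sub>v
            (blk_vec p (0\<^sub>v n) s - blk_row_sum p m A s (\<lambda>q. blk_vec p (0\<^sub>v n) q))) $ i - v $ l)
          \<le> \<gamma> * D * u l" by auto
        have zero: "blk_vec p (0\<^sub>v n) s - blk_row_sum p m A s (\<lambda>q. blk_vec p (0\<^sub>v n) q) = 0\<^sub>v (blk_size p s)"
        proof (intro eq_vecI)
          fix i' assume "i' < dim_vec (0\<^sub>v (blk_size p s) :: complex vec)"
          hence i': "i' < blk_size p s" by simp
          have psn: "p s + i' < n" using i' s blk_n[of s "p s + i'"] unfolding blk_size_def by auto
          have "(\<Sum>q<m. \<Sum>l\<in>{p q..<p (Suc q)}. A $$ (p s + i', l) * (0\<^sub>v n :: complex vec) $ l) = 0"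
          proof (rule sum.neutral, rule ballI, rule sum.neutral, rule ballI)
            fix q l assume "q \<in> {..<m}" "l \<in> {p q..<p (Suc q)}"
            hence "l < n" using blk_n by auto
            thus "A $$ (p s + i', l) * (0\<^sub>v n :: complex vec) $ l = 0" by simp
          qed
          thus "(blk_vec p (0\<^sub>v n) s - blk_row_sum p m A s (\<lambda>q. blk_vec p (0\<^sub>v n) q)) $ i' =
              (0\<^sub>v (blk_size p s) :: complex vec) $ i'"
            using i' psn blk_row_sum_index[OF i', of m A "\<lambda>q. 0\<^sub>v n"]
            by (simp add: blk_row_sum_def)
        qed (simp add: blk_row_sum_def)
        have Ci: "inv_mat (blk_mat p M s s) \<in> carrier_mat (blk_size p s) (blk_size p s)"
          using inv_mat_props[OF M_blk_ns[rule_format, OF s(1)] blk_mat_carrier] by auto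
        have "inv_mat (blk_mat p M s s) *\<^sub>v 0\<^sub>v (blk_size p s) = 0\<^sub>v (blk_size p s)"
          using Ci by (intro eq_vecI) (auto simp: scalar_prod_def)
        hence "(blk_vec p (0\<^sub>v n) s + inv_mat (blk_mat p M s s) *\<^sub>v
            (blk_vec p (0\<^sub>v n) s - blk_row_sum p m A s (\<lambda>q. blk_vec p (0\<^sub>v n) q))) $ i = 0"
          unfolding zero using i l by simp
        thus "cmod (v $ l) \<le> \<gamma> * D * u l" using * by simp
      qed
      obtain D0 where D00: "D0 \<ge> 0" and D0v: "\<forall>l<n. cmod (v $ l) \<le> D0 * u l"
        using max_ratio[OF u, of "\<lambda>l. cmod (v $ l)"] by auto
      have iter: "\<forall>l<n. cmod (v $ l) \<le> \<gamma>^k * D0 * u l" for k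
      proof (induction k)
        case 0 then show ?case using D0v by simp
      next
        case (Suc k)
        have "\<gamma>^k * D0 \<ge> 0" using g0 D00 by simp
        from step[OF this] Suc show ?case by (simp add: mult.assoc)
      qed
      show ?thesis
      proof (intro eq_vecI)
        fix l assume "l < dim_vec (0\<^sub>v n :: complex vec)"
        hence l: "l < n" by simp
        have "cmod (v $ l) \<le> 0"
          using geo_le_zero[OF g0, of "cmod (v $ l)" "D0 * u l"] iter l by (simp add: mult.assoc)
        thus "v $ l = 0\<^sub>v n $ l" using l by simp
      qed (use v in auto)
    qed
    have "det A \<noteq> 0"
      using det_0_iff_vec_prod_zero[OF A] inj by auto
    define xs0 where "xs0 = (1 / det A) \<cdot>\<^sub>v (adj_mat A *\<^sub>v b)"
    have xs0: "xs0 \<in> carrier_vec n" unfolding xs0_def using adj_mat(1)[OF A] b by auto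
    have "A *\<^sub>v xs0 = (1 / det A) \<cdot>\<^sub>v ((A * adj_mat A) *\<^sub>v b)"
      unfolding xs0_def using A adj_mat(1)[OF A] b
      by (simp add: mult_mat_vec[of A n n] assoc_mult_mat_vec[of A n n _ n b])
    also have "\<dots> = b" unfolding adj_mat(2)[OF A] using smult_mat_vec[of "1\<^sub>m n" n b "det A"] b \<open>det A \<noteq> 0\<close>
      by (simp add: smult_smult_assoc)
    finally have sol: "\<exists>xs \<in> carrier_vec n. A *\<^sub>v xs = b" using xs0 by blast
    have conv: "\<forall>i<n. (\<lambda>k. x k $ i) \<longlonglongrightarrow> xs $ i" if xs: "xs \<in> carrier_vec n" and bxs: "A *\<^sub>v xs = b" for xs
    proof -
      define E where "E k D \<longleftrightarrow> (\<forall>l<n. cmod (x k $ l - xs $ l) \<le> D * u l)" for k D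
      define Yb where "Yb k D \<longleftrightarrow> (\<forall>l<n. cmod (y k $ l - xs $ l) \<le> D * u l)" for k D
      define EB where "EB k s D \<longleftrightarrow> (\<forall>l. p s \<le> l \<and> l < p (Suc s) \<longrightarrow> cmod (x k $ l - xs $ l) \<le> D * u l)" for k s D
      have Emono: "E k D'" if "E k D" "D \<le> D'" for k D D'
        using that u unfolding E_def by (meson mult_right_mono order.trans less_imp_le)
      have Ymono: "Yb k D'" if "Yb k D" "D \<le> D'" for k D D'
        using that u unfolding Yb_def by (meson mult_right_mono order.trans less_imp_le)
      have blockE: "\<forall>q<m. \<forall>l. p q \<le> l \<and> l < p (Suc q) \<longrightarrow> cmod (x k $ l - xs $ l) \<le> D * u l"
        if "E k D" for k D using that blk_n unfolding E_def by blast
      have blockY: "\<forall>q<m. \<forall>l. p q \<le> l \<and> l < p (Suc q) \<longrightarrow> cmod (y k $ l - xs $ l) \<le> D * u l"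
        if "Yb k D" for k D using that blk_n unfolding Yb_def by blast
      have Eblocks: "E k D" if "\<forall>s<m. EB k s D" for k D
        unfolding E_def
      proof (intro allI impI)
        fix l assume l: "l < n"
        obtain s where s: "s < m" "p s \<le> l" "l < p (Suc s)" using bp_cover[OF part l] by auto
        thus "cmod (x k $ l - xs $ l) \<le> D * u l" using that unfolding EB_def by blast
      qed
      have Ystep: "Yb k (\<gamma> * D)" if D0: "D \<ge> 0" and hyp: "\<forall>s<m. \<forall>q<m. E (\<delta> s q k) D" for k D
        unfolding Yb_def
      proof (intro allI impI)
        fix l assume l: "l < n"
        obtain s where s: "s < m" "p s \<le> l" "l < p (Suc s)" using bp_cover[OF part l] by auto
        define i where "i = l - p s"
        have i: "i < blk_size p s" "p s + i = l" using s unfolding i_def blk_size_def by auto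
        have h: "\<forall>q<m. \<forall>l. p q \<le> l \<and> l < p (Suc q) \<longrightarrow> cmod (x (\<delta> s q k) $ l - xs $ l) \<le> D * u l"
          using hyp s(1) blockE by blast
        have "y k $ l = blk_vec p (y k) s $ i" using i by simp
        also have "\<dots> = (blk_vec p (x (\<delta> s s k)) s +
           inv_mat (blk_mat p M s s) *\<^sub>v
             (blk_vec p b s - blk_row_sum p m A s (\<lambda>q. blk_vec p (x (\<delta> s q k)) q))) $ i"
          using y_def s(1) by simp
        finally have "y k $ l = \<dots>" .
        with stM[OF s(1) bxs xs, of "\<lambda>q. x (\<delta> s q k)" D, OF h D0] i
        show "cmod (y k $ l - xs $ l) \<le> \<gamma> * D * u l" by auto
      qed
      have Xstep: "EB (Suc k) s (\<gamma> * D)"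
        if D0: "D \<ge> 0" and s: "s < m" "s \<in> \<Omega> k" and hyp: "\<forall>q<m. Yb (\<delta> s q k) D" for k s D
        unfolding EB_def
      proof (intro allI impI)
        fix l assume l: "p s \<le> l \<and> l < p (Suc s)"
        define i where "i = l - p s"
        have i: "i < blk_size p s" "p s + i = l" using l unfolding i_def blk_size_def by auto
        have h: "\<forall>q<m. \<forall>l. p q \<le> l \<and> l < p (Suc q) \<longrightarrow> cmod (y (\<delta> s q k) $ l - xs $ l) \<le> D * u l"
          using hyp blockY by blast
        have "x (Suc k) $ l = blk_vec p (x (Suc k)) s $ i" using i by simp
        also have "\<dots> = (blk_vec p (y (\<delta> s s k)) s +
           inv_mat (blk_mat p F s s) *\<^sub>v
             (blk_vec p b s - blk_row_sum p m A s (\<lambda>q. blk_vec p (y (\<delta> s q k)) q))) $ i"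
          using x_def s by simp
        finally have "x (Suc k) $ l = \<dots>" .
        with stF[OF s(1) bxs xs, of "\<lambda>q. y (\<delta> s q k)" D, OF h D0] i
        show "cmod (x (Suc k) $ l - xs $ l) \<le> \<gamma> * D * u l" by auto
      qed
      have Xsame: "x (Suc k) $ l = x k $ l" if "s < m" "s \<notin> \<Omega> k" "p s \<le> l" "l < p (Suc s)" for k s l
      proof -
        define i where "i = l - p s"
        have i: "i < blk_size p s" "p s + i = l" using that unfolding i_def blk_size_def by auto
        have "x (Suc k) $ l = blk_vec p (x (Suc k)) s $ i" using i by simp
        also have "\<dots> = blk_vec p (x k) s $ i" using x_def that by simp
        also have "\<dots> = x k $ l" using i by simp
        finally show ?thesis .
      qed
      obtain C0 where C00: "C0 \<ge> 0" and C0: "E 0 C0"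
        using max_ratio[OF u, of "\<lambda>l. cmod (x 0 $ l - xs $ l)"] unfolding E_def by auto
      have gC: "\<gamma> * C0 \<le> C0" using g0 C00 by (simp add: mult_left_le_one_le)
      have bounded: "\<forall>t\<le>k. E t C0" for k
      proof (induction k)
        case 0 then show ?case using C0 by simp
      next
        case (Suc k)
        have Yk: "Yb t C0" if "t \<le> k" for t
        proof -
          have "\<forall>s<m. \<forall>q<m. E (\<delta> s q t) C0" using Suc \<delta>_le that by (meson order.trans)
          from Ymono[OF Ystep[OF C00 this] gC] show ?thesis .
        qed
        have "E (Suc k) C0"
        proof (rule Eblocks, intro allI impI)
          fix s assume s: "s < m"
          show "EB (Suc k) s C0"
          proof (cases "s \<in> \<Omega> k")
            case True
            have "\<forall>q<m. Yb (\<delta> s q k) C0" using Yk \<delta>_le s by blast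
            note X = Xstep[OF C00 s True this, unfolded EB_def]
            show ?thesis unfolding EB_def
            proof (intro allI impI)
              fix l assume l: "p s \<le> l \<and> l < p (Suc s)"
              have ln: "l < n" using blk_n[OF s] l by auto
              have "cmod (x (Suc k) $ l - xs $ l) \<le> \<gamma> * C0 * u l" using X l by blast
              also have "\<dots> \<le> C0 * u l" using gC u ln by (intro mult_right_mono) auto
              finally show "cmod (x (Suc k) $ l - xs $ l) \<le> C0 * u l" .
            qed
          next
            case False
            have "E k C0" using Suc by simp
            thus ?thesis using Xsame[OF s False] blockE s unfolding EB_def by metis
          qed
        qed
        thus ?case using Suc le_Suc_eq by auto
      qed
      have allE: "E k C0" for k using bounded[of k] by simp
      have descent: "\<exists>K. \<forall>t\<ge>K. E t (\<gamma>^j * C0)" for j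
      proof (induction j)
        case 0 then show ?case using allE by simp
      next
        case (Suc j)
        define D where "D = \<gamma>^j * C0"
        have D0: "D \<ge> 0" unfolding D_def using g0 C00 by simp
        have gD: "\<gamma> * D \<le> D" using g0 D0 by (simp add: mult_left_le_one_le)
        from Suc obtain K where K: "\<forall>t\<ge>K. E t D" unfolding D_def by auto
        obtain K1 where K1: "\<forall>t\<ge>K1. \<forall>s<m. \<forall>q<m. K \<le> \<delta> s q t" using delay_lemma[OF \<delta>_lim] by blast
        have Y1: "Yb t D" if "t \<ge> K1" for t
        proof -
          have "\<forall>s<m. \<forall>q<m. E (\<delta> s q t) D" using K K1 that by blast
          from Ymono[OF Ystep[OF D0 this] gD] show ?thesis .
        qed
        obtain K2 where K2: "\<forall>t\<ge>K2. \<forall>s<m. \<forall>q<m. K1 \<le> \<delta> s q t" using delay_lemma[OF \<delta>_lim] by blast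
        define K2' where "K2' = max K2 K"
        have upd: "EB (Suc t) s (\<gamma> * D)" if "t \<ge> K2'" "s < m" "s \<in> \<Omega> t" for t s
        proof -
          have "\<forall>q<m. Yb (\<delta> s q t) D" using K2 Y1 that unfolding K2'_def by auto
          from Xstep[OF D0 that(2,3) this] show ?thesis .
        qed
        define ts where "ts s = (SOME t. t \<ge> K2' \<and> s \<in> \<Omega> t)" for s
        have ts: "ts s \<ge> K2' \<and> s \<in> \<Omega> (ts s)" if "s < m" for s
        proof -
          have "\<exists>t. t \<ge> K2' \<and> s \<in> \<Omega> t"
            using \<Omega>_inf that unfolding infinite_nat_iff_unbounded_le by auto
          thus ?thesis unfolding ts_def by (rule someI_ex)
        qed
        have stay: "EB t s (\<gamma> * D)" if s: "s < m" and t: "Suc (ts s) \<le> t" for s t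
          using t
        proof (induction t rule: dec_induct)
          case base
          then show ?case using upd ts s by auto
        next
          case (step t)
          show ?case
          proof (cases "s \<in> \<Omega> t")
            case True
            thus ?thesis using upd[OF _ s True] ts[OF s] step by auto
          next
            case False
            show ?thesis using step.IH Xsame[OF s False] unfolding EB_def by metis
          qed
        qed
        define K3 where "K3 = Suc (\<Sum>s<m. ts s)"
        have "\<forall>t\<ge>K3. E t (\<gamma>^Suc j * C0)"
        proof (intro allI impI)
          fix t assume t: "K3 \<le> t"
          have "\<forall>s<m. EB t s (\<gamma> * D)"
          proof (intro allI impI)
            fix s assume s: "s < m"
            have "ts s \<le> (\<Sum>s<m. ts s)" using s by (intro member_le_sum) auto
            hence "Suc (ts s) \<le> t" using t unfolding K3_def by auto
            thus "EB t s (\<gamma> * D)" using stay[OF s] by blast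
          qed
          from Eblocks[OF this] show "E t (\<gamma>^Suc j * C0)" unfolding D_def by (simp add: mult.assoc)
        qed
        thus ?case by blast
      qed
      show ?thesis
      proof (intro allI impI)
        fix i assume i: "i < n"
        show "(\<lambda>k. x k $ i) \<longlonglongrightarrow> xs $ i"
        proof (rule LIMSEQ_I)
          fix r :: real assume r: "r > 0"
          define c where "c = C0 * u i + 1"
          have ui: "u i > 0" using u i by blast
          have "C0 * u i \<ge> 0" using mult_nonneg_nonneg[OF C00 less_imp_le[OF ui]] .
          hence c: "c > 0" unfolding c_def by linarith
          obtain j where j: "\<gamma>^j < r / c" using real_arch_pow_inv[of "r/c" \<gamma>] r c g0 by auto
          obtain K where K: "\<forall>t\<ge>K. E t (\<gamma>^j * C0)" using descent by blast
          have "norm (x t $ i - xs $ i) < r" if "t \<ge> K" for t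
          proof -
            have "norm (x t $ i - xs $ i) \<le> \<gamma>^j * C0 * u i" using K that i unfolding E_def by blast
            also have "\<dots> \<le> \<gamma>^j * c" unfolding c_def mult.assoc using g0
              by (intro mult_left_mono) auto
            also have "\<dots> < r" using j c by (simp add: less_divide_eq)
            finally show ?thesis .
          qed
          thus "\<exists>no. \<forall>t\<ge>no. norm (x t $ i - xs $ i) < r" by blast
        qed
      qed
    qed
    show ?thesis using sol conv by blast
  qed
qed


end
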